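(* Let $m\in\mathbb{N}$ with $m\ge 2$. For all $l\in\mathbb{N}_0$, $t>0$, the function $c^t_{m,l}$ on $\mathbb{RP}^m\times\mathbb{RP}^m$ satisfies $|c^t_{m,l}| \le e^{-l(l+m-1)\frac t2}\,2^7(l+m-2)^{m+1}$, and $c^t_{m,0}=c^t_{m,1}=0$. For all $t>0$ and $[x],[y]\in\mathbb{RP}^m$, $$\Big(\sum_{l=0}^\infty c^t_{m,l}([x],[y])\Big)^2 = \sum_{n=0}^\infty d^t_{m,n}([x],[y]),\qquad \Big(\sum_{l=0}^\infty c^t_{m,l}([x],[y])\Big)^3 = \sum_{k=0}^\infty h^t_{m,k}([x],[y]).$$ For all $n,k\in\mathbb{N}_0$ and $t>0$, $$|d^t_{m,n}| \le e^{-(\frac{n^2}{2}+n(m-1))\frac t2}\,2^{14}(n+m-2)^{2m+3},\qquad |h^t_{m,k}| \le e^{-(\frac{k^2}{3}+k(m-1))\frac t2}\,2^{21}(k+m-2)^{3m+5}$$ on $\mathbb{RP}^m\times\mathbb{RP}^m$. Moreover $d^t_{m,n}=0$ for $n\in\{0,1,2,3\}$ and $h^t_{m,k}=0$ for $k\in\{0,1,2,3,4,5\}$, for all $t>0$.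
   Context: $\mathbb{RP}^m = \{[x]: x\in\mathbb{S}^m\}$, $[x]=\{x,-x\}$, $\mathbb{S}^m\subset\mathbb{R}^{m+1}$ the unit sphere. $C_l^{(m-1)/2}$ is the Gegenbauer polynomial of degree $l$ and parameter $(m-1)/2$. For $l\in\mathbb{N}_0$ and $t>0$, define $c^t_{m,l}([x],[y]) := 0$ if $l$ is odd or $l=0$, and for even $l>0$, $c^t_{m,l}([x],[y]) := e^{-l(l+m-1)\frac t2}\frac{2l+m-1}{m-1}C_l^{(m-1)/2}(\langle x,y\rangle)$ (unit representatives $x,y$). Further, for $n,k\in\mathbb{N}_0$, $d^t_{m,n} := \sum_{l=0}^n c^t_{m,l}c^t_{m,n-l}$ and $h^t_{m,k} := \sum_{n=0}^k d^t_{m,n}c^t_{m,k-n}$ (pointwise in $([x],[y])$). *)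

theory Defs
  imports "HOL-Analysis.Analysis"
begin

definition gegenbauer :: "real \<Rightarrow> nat \<Rightarrow> real \<Rightarrow> real" where
  "gegenbauer a n x =
     (\<Sum>k\<le>n div 2. (-1)^k * pochhammer a (n - k) / (fact k * fact (n - 2*k)) * (2*x)^(n - 2*k))"

text \<open>c^t_{m,l}([x],[y]) evaluated at unit representatives x, y.\<close>
definition cfun :: "nat \<Rightarrow> real \<Rightarrow> nat \<Rightarrow> 'a::real_inner \<Rightarrow> 'a \<Rightarrow> real" where
  "cfun m t l x y =
     (if odd l \<or> l = 0 then 0
      else exp (- (real l * (real l + real m - 1)) * t / 2)
           * (2 * real l + real m - 1) / (real m - 1)
           * gegenbauer ((real m - 1) / 2) l (inner x y))"

definition dfun :: "nat \<Rightarrow> real \<Rightarrow> nat \<Rightarrow> 'a::real_inner \<Rightarrow> 'a \<Rightarrow> real" where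
  "dfun m t n x y = (\<Sum>l\<le>n. cfun m t l x y * cfun m t (n - l) x y)"

definition hfun :: "nat \<Rightarrow> real \<Rightarrow> nat \<Rightarrow> 'a::real_inner \<Rightarrow> 'a \<Rightarrow> real" where
  "hfun m t k x y = (\<Sum>n\<le>k. dfun m t n x y * cfun m t (k - n) x y)"

end

theory Submission
  imports Defs "HOL-Real_Asymp.Real_Asymp"
begin

definition GT :: "real \<Rightarrow> nat \<Rightarrow> nat \<Rightarrow> real" where
  "GT a n k = (-1)^k * pochhammer a (n - k) / (fact k * fact (n - 2*k))"

definition G0 :: "real \<Rightarrow> nat \<Rightarrow> real \<Rightarrow> real" where
  "G0 a n u = (\<Sum>k\<le>n div 2. GT a n k * u^(n - 2*k))"
definition G1 :: "real \<Rightarrow> nat \<Rightarrow> real \<Rightarrow> real" where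
  "G1 a n u = (\<Sum>k\<le>n div 2. GT a n k * (real (n - 2*k) * u^(n - 2*k - 1)))"
definition G2 :: "real \<Rightarrow> nat \<Rightarrow> real \<Rightarrow> real" where
  "G2 a n u = (\<Sum>k\<le>n div 2. GT a n k * (real (n - 2*k) * (real (n - 2*k - 1) * u^(n - 2*k - 1 - 1))))"

lemma geg_G0: "gegenbauer a n x = G0 a n (2*x)"
  unfolding gegenbauer_def G0_def GT_def by (rule sum.cong) auto

lemma G0_deriv: "(G0 a n has_real_derivative G1 a n u) (at u)"
  unfolding G0_def[abs_def] G1_def
  apply (rule DERIV_sum)
  apply (rule DERIV_cmult)
  apply (rule DERIV_pow[THEN DERIV_cong])
  by simp

lemma G1_deriv: "(G1 a n has_real_derivative G2 a n u) (at u)"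
  unfolding G1_def[abs_def] G2_def
  apply (rule DERIV_sum)
  apply (rule DERIV_cmult)
  apply (rule DERIV_cmult)
  apply (rule DERIV_pow[THEN DERIV_cong])
  by simp

lemma G0_neg: "G0 a n (-u) = (-1)^n * G0 a n u"
  unfolding G0_def sum_distrib_left
proof (rule sum.cong)
  fix k assume "k \<in> {..n div 2}"
  hence e: "n = (n - 2*k) + 2*k" by auto
  have "(-1::real)^n = (-1)^(n-2*k)"
    by (subst e) (simp add: power_add power_mult)
  thus "GT a n k * (- u) ^ (n - 2 * k) = (- 1) ^ n * (GT a n k * u ^ (n - 2 * k))"
    by (simp add: power_minus[of u])
qed simp

lemma G_term:
  assumes "2*k \<le> n"
  shows "(4 - u^2) * (GT a n k * (real (n - 2*k) * (real (n - 2*k - 1) * u^(n - 2*k - 1 - 1))))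
     - (2*a+1) * u * (GT a n k * (real (n - 2*k) * u^(n - 2*k - 1)))
     + real n * (real n + 2*a) * (GT a n k * u^(n - 2*k))
   = 4 * (GT a n k * (real (n - 2*k) * (real (n - 2*k - 1) * u^(n - 2*k - 2))))
     + GT a n k * (4 * real k * (real n - real k + a)) * u^(n - 2*k)"
proof -
  obtain j where j: "n = j + 2*k" using assms by (metis le_add_diff_inverse2)
  have jj: "n - 2*k = j" using j by simp
  show ?thesis
  proof (cases j)
    case 0
    then show ?thesis unfolding jj using j by (simp add: algebra_simps)
  next
    case (Suc i)
    show ?thesis
    proof (cases i)
      case 0
      then show ?thesis unfolding jj using j Suc by (simp add: algebra_simps)
    next
      case (Suc r)
      have "n - 2*k - 2 = r" "n - 2*k - 1 - 1 = r" "n - 2*k - 1 = Suc r" using j Suc \<open>j = Suc i\<close> by auto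
      then show ?thesis unfolding jj using j Suc \<open>j = Suc i\<close>
        by (simp add: algebra_simps power2_eq_square)
    qed
  qed
qed

lemma GT_step:
  assumes "2*k + 2 \<le> n"
  shows "4 * (GT a n k * (real (n - 2*k) * real (n - 2*k - 1)))
       + GT a n (Suc k) * (4 * real (Suc k) * (real n - real (Suc k) + a)) = 0"
proof -
  define r where "r = n - 2*k - 2"
  have r: "n = r + 2*k + 2" using assms unfolding r_def by simp
  have e1: "n - 2*k = Suc (Suc r)" "n - 2*k - 1 = Suc r" "n - 2 * Suc k = r"
    "n - k = Suc (r + k + 1)" "n - Suc k = r + k + 1" using r by auto
  define X where "X = (-1)^k * pochhammer a (r+k+1) / (fact k * fact r)"
  have fr: "(fact (Suc (Suc r)) :: real) = real (Suc (Suc r)) * real (Suc r) * fact r"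
    by simp
  have fk: "(fact (Suc k) :: real) = real (Suc k) * fact k" by simp
  have g1: "GT a n k = X * (a + real (r+k+1)) / (real (Suc (Suc r)) * real (Suc r))"
    unfolding GT_def e1 X_def pochhammer_Suc fr by (simp add: field_simps)
  have g2: "GT a n (Suc k) = - X / real (Suc k)"
    unfolding GT_def e1 X_def fk by (simp add: field_simps)
  have nr: "real n - real (Suc k) + a = a + real (r+k+1)" using r by simp
  define A where "A = real (Suc (Suc r)) * real (Suc r)"
  define K where "K = real (Suc k)"
  define R where "R = a + real (r+k+1)"
  have A0: "A \<noteq> 0" unfolding A_def by simp
  have K0: "K \<noteq> 0" unfolding K_def by simp
  have h1: "X * R / A * A = X * R" using A0 by simp
  have h2: "- X / K * (4 * K * R) = - 4 * (X * R)" using K0 by simp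
  have "4 * (GT a n k * (real (n - 2*k) * real (n - 2*k - 1)))
       + GT a n (Suc k) * (4 * real (Suc k) * (real n - real (Suc k) + a))
       = 4 * (X * R / A * A) + - X / K * (4 * K * R)"
    unfolding g1 g2 e1 nr A_def K_def R_def by (simp only: mult.assoc diff_Suc_1)
  also have "\<dots> = 0" unfolding h1 h2 by simp
  finally show ?thesis .
qed

lemma G_ode: "(4 - u^2) * G2 a n u - (2*a+1) * u * G1 a n u + real n * (real n + 2*a) * G0 a n u = 0"
proof -
  let ?A = "\<lambda>k. 4 * (GT a n k * (real (n - 2*k) * (real (n - 2*k - 1) * u^(n - 2*k - 2))))"
  let ?B = "\<lambda>k. GT a n k * (4 * real k * (real n - real k + a)) * u^(n - 2*k)"
  have "(4 - u^2) * G2 a n u - (2*a+1) * u * G1 a n u + real n * (real n + 2*a) * G0 a n u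
      = (\<Sum>k\<le>n div 2. ?A k + ?B k)"
    unfolding G0_def G1_def G2_def sum_distrib_left sum_subtractf[symmetric] sum.distrib[symmetric]
    by (rule sum.cong[OF refl], rule G_term) auto
  also have "\<dots> = 0"
  proof (cases "n div 2")
    case 0
    then have "n \<le> 1" by auto
    then show ?thesis using 0 by (auto simp: le_Suc_eq)
  next
    case (Suc q)
    have "(\<Sum>k\<le>n div 2. ?A k + ?B k) = (\<Sum>k\<le>Suc q. ?A k) + (\<Sum>k\<le>Suc q. ?B k)"
      by (simp add: Suc sum.distrib)
    also have "(\<Sum>k\<le>Suc q. ?A k) = (\<Sum>k\<le>q. ?A k)"
    proof -
      have "n = 2 * (n div 2) + n mod 2" by simp
      moreover have "n mod 2 \<le> 1" by simp
      ultimately have "n - 2 * Suc q \<le> 1" using Suc by presburger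
      then have "?A (Suc q) = 0" by (auto simp: le_Suc_eq)
      then show ?thesis by simp
    qed
    also have "(\<Sum>k\<le>Suc q. ?B k) = (\<Sum>k\<le>q. ?B (Suc k))"
      by (subst sum.atMost_Suc_shift) simp
    also have "(\<Sum>k\<le>q. ?A k) + (\<Sum>k\<le>q. ?B (Suc k)) = (\<Sum>k\<le>q. ?A k + ?B (Suc k))"
      by (simp add: sum.distrib)
    also have "\<dots> = 0"
    proof (rule sum.neutral, intro ballI)
      fix k assume "k \<in> {..q}"
      then have k: "2*k + 2 \<le> n" using Suc by auto
      then have e: "n - 2 * Suc k = n - 2*k - 2" by simp
      have "?A k + ?B (Suc k) = (4 * (GT a n k * (real (n - 2*k) * real (n - 2*k - 1)))
       + GT a n (Suc k) * (4 * real (Suc k) * (real n - real (Suc k) + a))) * u^(n-2*k-2)"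
        unfolding e by (simp add: algebra_simps)
      then show "?A k + ?B (Suc k) = 0" using GT_step[OF k] by simp
    qed
    finally show ?thesis .
  qed
  finally show ?thesis .
qed


lemma GT_shift:
  assumes "2*k \<le> n"
  shows "GT a (Suc n) k * real (Suc n - 2*k) = a * GT (a+1) n k"
proof -
  define j where "j = n - 2*k"
  have e: "Suc n - 2*k = Suc j" "Suc n - k = Suc (n - k)" using assms unfolding j_def by auto
  have f: "(fact (Suc j) :: real) = real (Suc j) * fact j" by simp
  have "GT a (Suc n) k * real (Suc n - 2*k)
      = (-1)^k * (a * pochhammer (a+1) (n-k)) / (fact k * (real (Suc j) * fact j)) * real (Suc j)"
    unfolding GT_def e f pochhammer_rec by simp
  also have "\<dots> = a * ((-1)^k * pochhammer (a+1) (n-k) / (fact k * fact j))"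
    by (simp add: field_simps del: of_nat_Suc)
  also have "\<dots> = a * GT (a+1) n k" unfolding GT_def j_def by simp
  finally show ?thesis .
qed

lemma G1_G0: "G1 a (Suc n) u = a * G0 (a+1) n u"
proof -
  have "G1 a (Suc n) u = (\<Sum>k\<in>{..n div 2}. GT a (Suc n) k * (real (Suc n - 2*k) * u^(Suc n - 2*k - 1)))"
    unfolding G1_def
  proof (rule sum.mono_neutral_right)
    show "finite {..Suc n div 2}" by simp
    show "{..n div 2} \<subseteq> {..Suc n div 2}" by (simp add: div_le_mono)
    show "\<forall>i\<in>{..Suc n div 2} - {..n div 2}. GT a (Suc n) i * (real (Suc n - 2 * i) * u ^ (Suc n - 2 * i - 1)) = 0"
    proof
      fix i assume "i \<in> {..Suc n div 2} - {..n div 2}"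
      then have "Suc n - 2*i = 0" by auto
      then show "GT a (Suc n) i * (real (Suc n - 2 * i) * u ^ (Suc n - 2 * i - 1)) = 0" by simp
    qed
  qed
  also have "\<dots> = (\<Sum>k\<in>{..n div 2}. a * (GT (a+1) n k * u^(n - 2*k)))"
  proof (rule sum.cong[OF refl])
    fix k assume "k \<in> {..n div 2}"
    then have k: "2*k \<le> n" by auto
    have "Suc n - 2*k - 1 = n - 2*k" using k by auto
    then show "GT a (Suc n) k * (real (Suc n - 2*k) * u^(Suc n - 2*k - 1)) = a * (GT (a+1) n k * u^(n - 2*k))"
      using GT_shift[OF k, of a] by (simp add: mult.assoc[symmetric])
  qed
  also have "\<dots> = a * G0 (a+1) n u" unfolding G0_def sum_distrib_left ..
  finally show ?thesis .
qed


lemma G0_at2: "a > 0 \<Longrightarrow> G0 a n 2 = pochhammer (2*a) n / fact n"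
proof (induction n arbitrary: a)
  case 0
  then show ?case by (simp add: G0_def GT_def)
next
  case (Suc n)
  define N where "N = real (Suc n) * (real (Suc n) + 2*a)"
  have N0: "N > 0" unfolding N_def using Suc.prems by simp
  have ode: "(4 - 2^2) * G2 a (Suc n) 2 - (2*a+1) * 2 * G1 a (Suc n) 2 + N * G0 a (Suc n) 2 = 0"
    using G_ode[of 2 a "Suc n"] unfolding N_def by simp
  have ih: "G0 (a+1) n 2 = pochhammer (2*a+2) n / fact n"
    using Suc.IH[of "a+1"] Suc.prems by (simp add: algebra_simps)
  have "G0 a (Suc n) 2 = (2*a+1) * 2 * G1 a (Suc n) 2 / N"
    using ode N0 by (simp add: field_simps)
  also have "\<dots> = (2*a+1) * 2 * a * pochhammer (2*a+2) n / (fact n * N)"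
    unfolding G1_G0 ih by simp
  also have "\<dots> = pochhammer (2*a) (Suc n) / fact (Suc n)"
  proof -
    have p1: "pochhammer (2*a) (Suc n) = 2*a * pochhammer (2*a+1) n" by (simp add: pochhammer_rec)
    have p2: "pochhammer (2*a+1) n * (2*a+1+real n) = (2*a+1) * pochhammer (2*a+2) n"
      using pochhammer_Suc[of "2*a+1" n] pochhammer_rec[of "2*a+1" n] by (simp add: add.assoc)
    have pos: "2*a+1+real n > 0" using Suc.prems by simp
    have "pochhammer (2*a+1) n = (2*a+1) * pochhammer (2*a+2) n / (2*a+1+real n)"
      using p2 pos by (simp add: field_simps)
    moreover have "N = real (Suc n) * (2*a+1+real n)" unfolding N_def by simp
    moreover have "(fact (Suc n) :: real) = real (Suc n) * fact n" by simp
    moreover have "(fact n :: real) > 0" by simp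
    moreover have "real (Suc n) > 0" by simp
    ultimately show ?thesis unfolding p1 using pos
      by (simp only:) (simp add: field_simps del: of_nat_Suc)
  qed
  finally show ?case .
qed


lemma energy_alg:
  fixes g0 g1 g2 N w a :: real
  assumes N0: "N \<noteq> 0" and o: "(4 - w^2) * g2 = (2*a+1) * w * g1 - N * g0"
  shows "real 2 * (g1 * g0 ^ (2 - Suc 0)) + (((0 - real 2 * (1 * w ^ (2 - Suc 0))) * g1\<^sup>2 +
       real 2 * (g2 * g1 ^ (2 - Suc 0)) * (4 - w\<^sup>2)) * N - (4 - w\<^sup>2) * g1\<^sup>2 * 0) / (N * N)
     = 4 * a * w * g1^2 / N"
proof -
  have "real 2 * (g1 * g0 ^ (2 - Suc 0)) + (((0 - real 2 * (1 * w ^ (2 - Suc 0))) * g1\<^sup>2 +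
       real 2 * (g2 * g1 ^ (2 - Suc 0)) * (4 - w\<^sup>2)) * N - (4 - w\<^sup>2) * g1\<^sup>2 * 0) / (N * N)
     = 2 * g1 * g0 + (- 2 * w * g1^2 + 2 * g1 * ((4 - w^2) * g2)) / N"
    using N0 by (simp add: field_simps power2_eq_square)
  also have "\<dots> = 2 * g1 * g0 + (- 2 * w * g1^2 + 2 * g1 * ((2*a+1) * w * g1 - N * g0)) / N"
    unfolding o ..
  also have "\<dots> = 4 * a * w * g1^2 / N"
    using N0 by (simp add: field_simps power2_eq_square)
  finally show ?thesis .
qed

lemma G_energy_deriv:
  assumes N0: "N \<noteq> 0" and NN: "N = real n * (real n + 2*a)"
  shows "((\<lambda>w. (G0 a n w)^2 + (4 - w^2) * (G1 a n w)^2 / N) has_real_derivative (4 * a * w * (G1 a n w)^2 / N)) (at w)"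
proof -
  have o: "(4 - w^2) * G2 a n w = (2*a+1) * w * G1 a n w - N * G0 a n w"
    using G_ode[of w a n] NN by (simp add: algebra_simps)
  show ?thesis
    apply (rule DERIV_cong)
     apply (rule derivative_eq_intros G0_deriv G1_deriv refl)+
      apply (rule N0)
     apply (rule refl)
    apply (rule energy_alg[OF N0 o])
    apply (rule refl)
    done
qed


lemma G0_bound:
  assumes a: "a > 0" and n: "n \<ge> 1" and u: "\<bar>u\<bar> \<le> 2"
  shows "\<bar>G0 a n u\<bar> \<le> pochhammer (2*a) n / fact n"
proof -
  define N where "N = real n * (real n + 2*a)"
  have N0: "N > 0" unfolding N_def using a n by simp
  define F where "F = (\<lambda>w. (G0 a n w)^2 + (4 - w^2) * (G1 a n w)^2 / N)"
  have D: "(F has_real_derivative (4 * a * w * (G1 a n w)^2 / N)) (at w)" for w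
    unfolding F_def by (rule G_energy_deriv) (use N0 N_def n in auto)
  have F2: "F 2 = (G0 a n 2)^2" "F (-2) = (G0 a n 2)^2"
    unfolding F_def by (simp_all add: G0_neg power_mult_distrib flip: power_mult)
  have "u^2 \<le> 2^2" using abs_le_square_iff[of u 2] u by simp
  then have "0 \<le> (4 - u^2) * (G1 a n u)^2 / N" using N0 by simp
  then have low: "(G0 a n u)^2 \<le> F u"
    unfolding F_def by simp
  have "F u \<le> (G0 a n 2)^2"
  proof (cases "u \<ge> 0")
    case True
    have "F u \<le> F 2"
    proof (rule DERIV_nonneg_imp_nondecreasing[of u 2 F])
      show "u \<le> 2" using u by simp
      fix x assume "u \<le> x" "x \<le> 2"
      then show "\<exists>y. (F has_real_derivative y) (at x) \<and> 0 \<le> y"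
        using D N0 True a by (intro exI[of _ "4 * a * x * (G1 a n x)^2 / N"]) auto
    qed
    then show ?thesis using F2 by simp
  next
    case False
    have "F (-2) \<ge> F u"
    proof (rule DERIV_nonpos_imp_nonincreasing[of "-2" u F])
      show "-2 \<le> u" using u by simp
      fix x assume "-2 \<le> x" "x \<le> u"
      then have "x \<le> 0" using False by simp
      then have "4 * a * x * (G1 a n x)^2 / N \<le> 0" using N0 a
        by (intro divide_nonpos_pos mult_nonpos_nonneg mult_nonneg_nonpos) auto
      then show "\<exists>y. (F has_real_derivative y) (at x) \<and> y \<le> 0"
        using D by blast
    qed
    then show ?thesis using F2 by simp
  qed
  with low have "(G0 a n u)^2 \<le> (G0 a n 2)^2" by simp
  then have "\<bar>G0 a n u\<bar> \<le> \<bar>G0 a n 2\<bar>" by (simp add: abs_le_square_iff)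
  also have "\<dots> = pochhammer (2*a) n / fact n"
    using G0_at2[OF a] a by (simp add: pochhammer_nonneg)
  finally show ?thesis .
qed


lemma geg_bound:
  assumes m2: "m \<ge> 2" and l: "l \<ge> 1" and x: "\<bar>x\<bar> \<le> 1"
  shows "\<bar>gegenbauer ((real m - 1)/2) l x\<bar> \<le> (real l + real m - 2) ^ (m - 2)"
proof -
  have a: "(real m - 1)/2 > 0" using m2 by simp
  have u: "\<bar>2*x\<bar> \<le> 2" using x by simp
  have "\<bar>gegenbauer ((real m - 1)/2) l x\<bar> \<le> pochhammer (2*((real m - 1)/2)) l / fact l"
    unfolding geg_G0 by (rule G0_bound[OF a l u])
  also have "pochhammer (2*((real m - 1)/2)) l / fact l = real (l + m - 2) gchoose l"
  proof -
    have e: "2*((real m - 1)/2) = real (l+m-2) - real l + 1" using m2 by (simp add: of_nat_diff)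
    show ?thesis by (simp only: e gbinomial_pochhammer')
  qed
  also have "\<dots> = real ((l + m - 2) choose l)" by (simp add: binomial_gbinomial)
  also have "(l + m - 2) choose l = (l + m - 2) choose (m - 2)"
    using m2 by (subst binomial_symmetric) (auto intro: arg_cong2[where f=binomial])
  also have "\<dots> \<le> (l + m - 2) ^ (m - 2)" by (rule binomial_le_pow) simp
  also have "real ((l + m - 2) ^ (m - 2)) = (real l + real m - 2) ^ (m - 2)"
    using m2 by (simp add: of_nat_diff)
  finally show ?thesis by simp
qed

lemma c_bound3:
  fixes x y :: "'a::real_inner"
  assumes m2: "m \<ge> 2" and nx: "norm x = 1" and ny: "norm y = 1"
  shows "\<bar>cfun m t l x y\<bar> \<le> exp (- (real l * (real l + real m - 1)) * t / 2) * (3 * (real l + real m - 2)^(m-1))"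
proof (cases "odd l \<or> l = 0")
  case True
  then show ?thesis unfolding cfun_def using m2 by simp
next
  case False
  then have l2: "l \<ge> 2" and ev: "even l" by auto
  have xy: "\<bar>inner x y\<bar> \<le> 1" using Cauchy_Schwarz_ineq2[of x y] nx ny by simp
  define E where "E = exp (- (real l * (real l + real m - 1)) * t / 2)"
  define Q where "Q = real l + real m - 2"
  have Q2: "Q \<ge> 2" unfolding Q_def using l2 m2 by simp
  have g: "\<bar>gegenbauer ((real m - 1)/2) l (inner x y)\<bar> \<le> Q ^ (m - 2)"
    unfolding Q_def by (rule geg_bound[OF m2 _ xy]) (use l2 in simp)
  have f: "(2 * real l + real m - 1) / (real m - 1) \<le> 3 * Q"
  proof -
    have "(2 * real l + real m - 1) / (real m - 1) \<le> 2 * real l + real m - 1"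
      using m2 l2 by (simp add: divide_le_eq)
    also have "\<dots> \<le> 3 * Q" unfolding Q_def using m2 l2 by simp
    finally show ?thesis .
  qed
  have fpos: "(2 * real l + real m - 1) / (real m - 1) \<ge> 0" using m2 by simp
  have "\<bar>cfun m t l x y\<bar> = E * ((2 * real l + real m - 1) / (real m - 1)) * \<bar>gegenbauer ((real m - 1)/2) l (inner x y)\<bar>"
    unfolding cfun_def E_def using False fpos m2 by (simp add: abs_mult)
  also have "\<dots> \<le> E * (3 * Q) * Q ^ (m - 2)"
    using fpos Q2 by (intro mult_mono mult_left_mono f g) (auto simp: E_def)
  also have "\<dots> = E * (3 * Q ^ (m - 1))"
  proof -
    have "Q * Q ^ (m - 2) = Q ^ (m - 1)" using m2 by (metis Suc_diff_Suc Suc_1 le_eq_less_or_eq diff_Suc_1 less_eq_Suc_le numeral_2_eq_2 power_Suc Suc_le_lessD)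
    then show ?thesis by (simp add: algebra_simps)
  qed
  finally show ?thesis unfolding E_def Q_def .
qed


lemma exp_d:
  assumes ln: "l \<le> n" and t: "t > 0"
  shows "exp (- (real l * (real l + real m - 1)) * t / 2) * exp (- (real (n-l) * (real (n-l) + real m - 1)) * t / 2)
     \<le> exp (- (real n ^ 2 / 2 + real n * (real m - 1)) * t / 2)"
proof -
  define A where "A = real l * (real l + real m - 1)"
  define B where "B = real (n-l) * (real (n-l) + real m - 1)"
  define C where "C = real n ^ 2 / 2 + real n * (real m - 1)"
  have "A + B - C = (2 * real l - real n)^2 / 2"
    unfolding A_def B_def C_def using ln by (simp add: of_nat_diff power2_eq_square field_simps)
  then have key: "C \<le> A + B" by (smt (verit) zero_le_power2 divide_nonneg_pos)
  have "C * t \<le> (A + B) * t" by (rule mult_right_mono[OF key]) (use t in simp)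
  then have "- A * t / 2 + - B * t / 2 \<le> - C * t / 2" by (simp add: algebra_simps)
  then show ?thesis unfolding A_def B_def C_def by (simp flip: exp_add)
qed

lemma exp_h:
  assumes ln: "n \<le> k" and t: "t > 0"
  shows "exp (- (real n ^ 2 / 2 + real n * (real m - 1)) * t / 2) * exp (- (real (k-n) * (real (k-n) + real m - 1)) * t / 2)
     \<le> exp (- (real k ^ 2 / 3 + real k * (real m - 1)) * t / 2)"
proof -
  define A where "A = real n ^ 2 / 2 + real n * (real m - 1)"
  define B where "B = real (k-n) * (real (k-n) + real m - 1)"
  define C where "C = real k ^ 2 / 3 + real k * (real m - 1)"
  have "A + B - C = (3 * real n - 2 * real k)^2 / 6"
    unfolding A_def B_def C_def using ln by (simp add: of_nat_diff power2_eq_square field_simps)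
  then have key: "C \<le> A + B" by (smt (verit) zero_le_power2 divide_nonneg_pos)
  have "C * t \<le> (A + B) * t" by (rule mult_right_mono[OF key]) (use t in simp)
  then have "- A * t / 2 + - B * t / 2 \<le> - C * t / 2" by (simp add: algebra_simps)
  then show ?thesis unfolding A_def B_def C_def by (simp flip: exp_add)
qed

lemma c01: "l \<le> 1 \<Longrightarrow> cfun m t l x y = 0"
  unfolding cfun_def by (auto simp: le_Suc_eq)

lemma d_zero: "n \<le> 3 \<Longrightarrow> dfun m t n x y = 0"
  unfolding dfun_def
proof (rule sum.neutral, intro ballI)
  fix l assume "n \<le> 3" "l \<in> {..n}"
  then have "l \<le> 1 \<or> n - l \<le> 1" by auto
  then show "cfun m t l x y * cfun m t (n - l) x y = 0" by (metis c01 mult_zero_left mult_zero_right)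
qed

lemma h_zero: "k \<le> 5 \<Longrightarrow> hfun m t k x y = 0"
  unfolding hfun_def
proof (rule sum.neutral, intro ballI)
  fix n assume "k \<le> 5" "n \<in> {..k}"
  then have "n \<le> 3 \<or> k - n \<le> 1" by auto
  then show "dfun m t n x y * cfun m t (k - n) x y = 0" by (metis c01 d_zero mult_zero_left mult_zero_right)
qed

lemma d_aux:
  fixes x y :: "'a::real_inner"
  assumes m2: "m \<ge> 2" and nx: "norm x = 1" and ny: "norm y = 1" and t: "t > 0"
  shows "\<bar>dfun m t n x y\<bar> \<le> (real n + 1) * (9 * (real n + real m - 2)^(2*(m-1)) *
            exp (- (real n ^ 2 / 2 + real n * (real m - 1)) * t / 2))"
proof -
  define E' where "E' = exp (- (real n ^ 2 / 2 + real n * (real m - 1)) * t / 2)"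
  define Q where "Q = real n + real m - 2"
  have "\<bar>dfun m t n x y\<bar> \<le> (\<Sum>l\<le>n. \<bar>cfun m t l x y * cfun m t (n - l) x y\<bar>)"
    unfolding dfun_def by (rule sum_abs)
  also have "\<dots> \<le> (\<Sum>l\<le>n. 9 * Q^(2*(m-1)) * E')"
  proof (rule sum_mono)
    fix l assume "l \<in> {..n}"
    then have ln: "l \<le> n" by simp
    define El where "El = exp (- (real l * (real l + real m - 1)) * t / 2)"
    define Er where "Er = exp (- (real (n-l) * (real (n-l) + real m - 1)) * t / 2)"
    have Ql: "0 \<le> real l + real m - 2" "real l + real m - 2 \<le> Q" using m2 ln unfolding Q_def by auto
    have Qr: "0 \<le> real (n-l) + real m - 2" "real (n-l) + real m - 2 \<le> Q" using m2 ln unfolding Q_def by auto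
    have "\<bar>cfun m t l x y * cfun m t (n - l) x y\<bar> = \<bar>cfun m t l x y\<bar> * \<bar>cfun m t (n - l) x y\<bar>"
      by (simp add: abs_mult)
    also have "\<dots> \<le> (El * (3 * (real l + real m - 2)^(m-1))) * (Er * (3 * (real (n-l) + real m - 2)^(m-1)))"
      unfolding El_def Er_def
      by (intro mult_mono c_bound3[OF m2 nx ny]) (use Ql in auto)
    also have "\<dots> = 9 * (El * Er) * ((real l + real m - 2)^(m-1) * (real (n-l) + real m - 2)^(m-1))"
      by (simp add: algebra_simps)
    also have "\<dots> \<le> 9 * E' * (Q^(m-1) * Q^(m-1))"
      unfolding El_def Er_def E'_def
      by (intro mult_mono mult_left_mono exp_d[OF ln t] power_mono Ql Qr) (use Ql Qr in auto)
    also have "\<dots> = 9 * Q^(2*(m-1)) * E'"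
    proof -
      have "Q^(m-1) * Q^(m-1) = Q^(2*(m-1))" by (metis power_add mult_2)
      then show ?thesis by simp
    qed
    finally show "\<bar>cfun m t l x y * cfun m t (n - l) x y\<bar> \<le> 9 * Q^(2*(m-1)) * E'" .
  qed
  also have "\<dots> = (real n + 1) * (9 * Q^(2*(m-1)) * E')" by simp
  finally show ?thesis unfolding E'_def Q_def .
qed

lemma d_bound:
  fixes x y :: "'a::real_inner"
  assumes m2: "m \<ge> 2" and nx: "norm x = 1" and ny: "norm y = 1" and t: "t > 0"
  shows "\<bar>dfun m t n x y\<bar> \<le> exp (- (real n ^ 2 / 2 + real n * (real m - 1)) * t / 2)
                               * 2^14 * (real n + real m - 2) ^ (2 * m + 3)"
proof (cases "n \<le> 3")
  case True
  have "0 \<le> (real n + real m - 2)^(2*m+3)" using m2 by simp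
  then show ?thesis by (simp add: d_zero[OF True])
next
  case False
  define E' where "E' = exp (- (real n ^ 2 / 2 + real n * (real m - 1)) * t / 2)"
  define Q where "Q = real n + real m - 2"
  have Q4: "Q \<ge> 4" unfolding Q_def using False m2 by simp
  have E0: "E' \<ge> 0" unfolding E'_def by simp
  have "\<bar>dfun m t n x y\<bar> \<le> (real n + 1) * (9 * Q^(2*(m-1)) * E')"
    unfolding E'_def Q_def by (rule d_aux[OF m2 nx ny t])
  also have "\<dots> \<le> (2 * Q) * (9 * Q^(2*(m-1)) * E')"
    using m2 Q4 E0 by (intro mult_right_mono) (auto simp: Q_def)
  also have "\<dots> = 18 * Q^(Suc (2*(m-1))) * E'" by (simp add: algebra_simps)
  also have "\<dots> \<le> 2^14 * Q^(2*m+3) * E'"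
    using E0 Q4 m2 by (intro mult_right_mono mult_mono power_increasing) auto
  finally show ?thesis unfolding E'_def Q_def by (simp add: algebra_simps)
qed

lemma h_bound:
  fixes x y :: "'a::real_inner"
  assumes m2: "m \<ge> 2" and nx: "norm x = 1" and ny: "norm y = 1" and t: "t > 0"
  shows "\<bar>hfun m t k x y\<bar> \<le> exp (- (real k ^ 2 / 3 + real k * (real m - 1)) * t / 2)
                               * 2^21 * (real k + real m - 2) ^ (3 * m + 5)"
proof (cases "k \<le> 5")
  case True
  have "0 \<le> (real k + real m - 2)^(3*m+5)" using m2 by simp
  then show ?thesis by (simp add: h_zero[OF True])
next
  case False
  define E'' where "E'' = exp (- (real k ^ 2 / 3 + real k * (real m - 1)) * t / 2)"
  define Q where "Q = real k + real m - 2"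
  have Q6: "Q \<ge> 6" unfolding Q_def using False m2 by simp
  have E0: "E'' \<ge> 0" unfolding E''_def by simp
  have "\<bar>hfun m t k x y\<bar> \<le> (\<Sum>n\<le>k. \<bar>dfun m t n x y * cfun m t (k - n) x y\<bar>)"
    unfolding hfun_def by (rule sum_abs)
  also have "\<dots> \<le> (\<Sum>n\<le>k. 3 * 2^14 * Q^(2*m+3+(m-1)) * E'')"
  proof (rule sum_mono)
    fix n assume "n \<in> {..k}"
    then have nk: "n \<le> k" by simp
    define El where "El = exp (- (real n ^ 2 / 2 + real n * (real m - 1)) * t / 2)"
    define Er where "Er = exp (- (real (k-n) * (real (k-n) + real m - 1)) * t / 2)"
    have Ql: "0 \<le> real n + real m - 2" "real n + real m - 2 \<le> Q" using m2 nk unfolding Q_def by auto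
    have Qr: "0 \<le> real (k-n) + real m - 2" "real (k-n) + real m - 2 \<le> Q" using m2 nk unfolding Q_def by auto
    have "\<bar>dfun m t n x y * cfun m t (k - n) x y\<bar> = \<bar>dfun m t n x y\<bar> * \<bar>cfun m t (k - n) x y\<bar>"
      by (simp add: abs_mult)
    also have "\<dots> \<le> (El * 2^14 * (real n + real m - 2)^(2*m+3)) * (Er * (3 * (real (k-n) + real m - 2)^(m-1)))"
      unfolding El_def Er_def
      by (intro mult_mono c_bound3[OF m2 nx ny] d_bound[OF m2 nx ny t]) (use Ql in auto)
    also have "\<dots> = 3 * 2^14 * (El * Er) * ((real n + real m - 2)^(2*m+3) * (real (k-n) + real m - 2)^(m-1))"
      by (simp add: algebra_simps)
    also have "\<dots> \<le> 3 * 2^14 * E'' * (Q^(2*m+3) * Q^(m-1))"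
      unfolding El_def Er_def E''_def
      by (intro mult_mono mult_left_mono exp_h[OF nk t] power_mono Ql Qr) (use Ql Qr in auto)
    also have "\<dots> = 3 * 2^14 * Q^(2*m+3+(m-1)) * E''"
      by (simp add: algebra_simps power_add)
    finally show "\<bar>dfun m t n x y * cfun m t (k - n) x y\<bar> \<le> 3 * 2^14 * Q^(2*m+3+(m-1)) * E''" .
  qed
  also have "\<dots> = (real k + 1) * (3 * 2^14 * Q^(2*m+3+(m-1)) * E'')" by simp
  also have "\<dots> \<le> (2 * Q) * (3 * 2^14 * Q^(2*m+3+(m-1)) * E'')"
    using m2 Q6 E0 by (intro mult_right_mono) (auto simp: Q_def)
  also have "\<dots> = 6 * 2^14 * Q^(Suc (2*m+3+(m-1))) * E''" by (simp only: power_Suc) (simp add: algebra_simps)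
  also have "\<dots> \<le> 2^21 * Q^(3*m+5) * E''"
    using E0 Q6 m2 by (intro mult_right_mono mult_mono power_increasing) auto
  finally show ?thesis unfolding E''_def Q_def by (simp add: algebra_simps)
qed


lemma summable_pe:
  assumes s: "(s::real) > 0"
  shows "summable (\<lambda>n::nat. (real n + b) ^ p * exp (- real n * s))"
proof (rule summable_comparison_test_bigo[where g = "\<lambda>n. real n powr -2"])
  show "summable (\<lambda>n. norm (real n powr -2))"
    by (simp add: summable_real_powr_iff)
  show "(\<lambda>n::nat. (real n + b) ^ p * exp (- real n * s)) \<in> O(\<lambda>n. real n powr -2)"
    using s by real_asymp
qed

lemma c_summable:
  fixes x y :: "'a::real_inner"
  assumes m2: "m \<ge> 2" and nx: "norm x = 1" and ny: "norm y = 1" and t: "t > 0"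
  shows "summable (\<lambda>l. norm (cfun m t l x y))"
proof (rule summable_comparison_test)
  show "summable (\<lambda>l. 3 * ((real l + real m) ^ (m-1) * exp (- real l * (t/2))))"
    by (intro summable_mult summable_pe) (use t in simp)
  show "\<exists>N. \<forall>l\<ge>N. norm (norm (cfun m t l x y)) \<le> 3 * ((real l + real m) ^ (m-1) * exp (- real l * (t/2)))"
  proof (intro exI allI impI)
    fix l :: nat
    have e: "exp (- (real l * (real l + real m - 1)) * t / 2) \<le> exp (- real l * (t/2))"
    proof -
      have "real l \<le> real l * (real l + real m - 1)" using m2 by (simp add: mult_le_cancel_left1)
      then have "real l * t \<le> real l * (real l + real m - 1) * t" using t by (intro mult_right_mono) auto
      then show ?thesis by simp
    qed
    have q: "(real l + real m - 2) ^ (m-1) \<le> (real l + real m) ^ (m-1)"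
      using m2 by (intro power_mono) auto
    have "norm (norm (cfun m t l x y)) = \<bar>cfun m t l x y\<bar>" by simp
    also have "\<dots> \<le> exp (- (real l * (real l + real m - 1)) * t / 2) * (3 * (real l + real m - 2)^(m-1))"
      by (rule c_bound3[OF m2 nx ny])
    also have "\<dots> \<le> exp (- real l * (t/2)) * (3 * (real l + real m)^(m-1))"
      using m2 by (intro mult_mono e q) auto
    finally show "norm (norm (cfun m t l x y)) \<le> 3 * ((real l + real m) ^ (m-1) * exp (- real l * (t/2)))"
      by (simp add: algebra_simps)
  qed
qed

lemma d_summable:
  fixes x y :: "'a::real_inner"
  assumes m2: "m \<ge> 2" and nx: "norm x = 1" and ny: "norm y = 1" and t: "t > 0"
  shows "summable (\<lambda>n. norm (dfun m t n x y))"
proof (rule summable_comparison_test)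
  show "summable (\<lambda>n. 2^14 * ((real n + real m) ^ (2*m+3) * exp (- real n * (t/2))))"
    by (intro summable_mult summable_pe) (use t in simp)
  show "\<exists>N. \<forall>n\<ge>N. norm (norm (dfun m t n x y)) \<le> 2^14 * ((real n + real m) ^ (2*m+3) * exp (- real n * (t/2)))"
  proof (intro exI allI impI)
    fix n :: nat
    have e: "exp (- (real n ^ 2 / 2 + real n * (real m - 1)) * t / 2) \<le> exp (- real n * (t/2))"
    proof -
      have "real n * 1 \<le> real n * (real m - 1)" using m2 by (intro mult_left_mono) auto
      moreover have "0 \<le> real n ^ 2 / 2" by simp
      ultimately have "real n \<le> real n ^ 2 / 2 + real n * (real m - 1)" by linarith
      then have "real n * t \<le> (real n ^ 2 / 2 + real n * (real m - 1)) * t" using t by (intro mult_right_mono) auto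
      then show ?thesis by (simp add: algebra_simps)
    qed
    have q: "(real n + real m - 2) ^ (2*m+3) \<le> (real n + real m) ^ (2*m+3)"
      using m2 by (intro power_mono) auto
    have "norm (norm (dfun m t n x y)) = \<bar>dfun m t n x y\<bar>" by simp
    also have "\<dots> \<le> exp (- (real n ^ 2 / 2 + real n * (real m - 1)) * t / 2) * 2^14 * (real n + real m - 2) ^ (2 * m + 3)"
      by (rule d_bound[OF m2 nx ny t])
    also have "\<dots> \<le> exp (- real n * (t/2)) * 2^14 * (real n + real m) ^ (2 * m + 3)"
      using m2 by (intro mult_mono e q) auto
    finally show "norm (norm (dfun m t n x y)) \<le> 2^14 * ((real n + real m) ^ (2*m+3) * exp (- real n * (t/2)))"
      by (simp add: algebra_simps)
  qed
qed

theorem lemma3p5: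
  fixes m :: nat
  assumes m2: "m \<ge> 2" and dim: "CARD('n::finite) = m + 1"
  shows
    "(\<forall>l t (x::real^'n) y. t > 0 \<longrightarrow> norm x = 1 \<longrightarrow> norm y = 1 \<longrightarrow>
        \<bar>cfun m t l x y\<bar> \<le> exp (- (real l * (real l + real m - 1)) * t / 2)
                               * 2^7 * (real l + real m - 2) ^ (m + 1))
   \<and> (\<forall>t (x::real^'n) y. cfun m t 0 x y = 0 \<and> cfun m t 1 x y = 0)
   \<and> (\<forall>t (x::real^'n) y. t > 0 \<longrightarrow> norm x = 1 \<longrightarrow> norm y = 1 \<longrightarrow>
        summable (\<lambda>l. cfun m t l x y)
      \<and> (\<lambda>n. dfun m t n x y) sums ((\<Sum>l. cfun m t l x y) ^ 2)
      \<and> (\<lambda>k. hfun m t k x y) sums ((\<Sum>l. cfun m t l x y) ^ 3))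
   \<and> (\<forall>n t (x::real^'n) y. t > 0 \<longrightarrow> norm x = 1 \<longrightarrow> norm y = 1 \<longrightarrow>
        \<bar>dfun m t n x y\<bar> \<le> exp (- (real n ^ 2 / 2 + real n * (real m - 1)) * t / 2)
                               * 2^14 * (real n + real m - 2) ^ (2 * m + 3))
   \<and> (\<forall>k t (x::real^'n) y. t > 0 \<longrightarrow> norm x = 1 \<longrightarrow> norm y = 1 \<longrightarrow>
        \<bar>hfun m t k x y\<bar> \<le> exp (- (real k ^ 2 / 3 + real k * (real m - 1)) * t / 2)
                               * 2^21 * (real k + real m - 2) ^ (3 * m + 5))
   \<and> (\<forall>n t (x::real^'n) y. n \<le> 3 \<longrightarrow> t > 0 \<longrightarrow> dfun m t n x y = 0)
   \<and> (\<forall>k t (x::real^'n) y. k \<le> 5 \<longrightarrow> t > 0 \<longrightarrow> hfun m t k x y = 0)"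
proof (intro conjI allI impI)
  fix l :: nat and t :: real and x y :: "real^'n"
  assume t: "t > 0" and nx: "norm x = 1" and ny: "norm y = 1"
  define E where "E = exp (- (real l * (real l + real m - 1)) * t / 2)"
  define Q where "Q = real l + real m - 2"
  show "\<bar>cfun m t l x y\<bar> \<le> exp (- (real l * (real l + real m - 1)) * t / 2) * 2^7 * (real l + real m - 2) ^ (m + 1)"
  proof (cases "l \<le> 1")
    case True
    have "0 \<le> (real l + real m - 2) ^ (m + 1)" using m2 by simp
    then show ?thesis by (simp add: c01[OF True])
  next
    case False
    have Q2: "Q \<ge> 1" unfolding Q_def using False m2 by simp
    have "\<bar>cfun m t l x y\<bar> \<le> E * (3 * Q^(m-1))" unfolding E_def Q_def by (rule c_bound3[OF m2 nx ny])
    also have "\<dots> \<le> E * (2^7 * Q^(m+1))"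
      using Q2 by (intro mult_left_mono mult_mono power_increasing) (auto simp: E_def)
    finally show ?thesis unfolding E_def Q_def by (simp add: algebra_simps)
  qed
next
  fix t :: real and x y :: "real^'n"
  show "cfun m t 0 x y = 0" by (simp add: c01)
  show "cfun m t 1 x y = 0" by (simp add: c01)
next
  fix t :: real and x y :: "real^'n"
  assume t: "t > 0" and nx: "norm x = 1" and ny: "norm y = 1"
  have cs: "summable (\<lambda>l. norm (cfun m t l x y))" by (rule c_summable[OF m2 nx ny t])
  show "summable (\<lambda>l. cfun m t l x y)" using cs by (rule summable_norm_cancel)
  have ds: "(\<lambda>n. dfun m t n x y) sums ((\<Sum>l. cfun m t l x y) * (\<Sum>l. cfun m t l x y))"
    unfolding dfun_def by (rule Cauchy_product_sums[OF cs cs])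
  then show "(\<lambda>n. dfun m t n x y) sums ((\<Sum>l. cfun m t l x y) ^ 2)" by (simp add: power2_eq_square)
  have dsum: "(\<Sum>n. dfun m t n x y) = (\<Sum>l. cfun m t l x y) * (\<Sum>l. cfun m t l x y)"
    using ds by (rule sums_unique[symmetric])
  have "(\<lambda>k. hfun m t k x y) sums ((\<Sum>n. dfun m t n x y) * (\<Sum>l. cfun m t l x y))"
    unfolding hfun_def by (rule Cauchy_product_sums[OF d_summable[OF m2 nx ny t] cs])
  then show "(\<lambda>k. hfun m t k x y) sums ((\<Sum>l. cfun m t l x y) ^ 3)"
    unfolding dsum by (simp add: power3_eq_cube)
next
  fix n :: nat and t :: real and x y :: "real^'n"
  assume t: "t > 0" and nx: "norm x = 1" and ny: "norm y = 1"
  show "\<bar>dfun m t n x y\<bar> \<le> exp (- (real n ^ 2 / 2 + real n * (real m - 1)) * t / 2) * 2^14 * (real n + real m - 2) ^ (2 * m + 3)"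
    by (rule d_bound[OF m2 nx ny t])
next
  fix k :: nat and t :: real and x y :: "real^'n"
  assume t: "t > 0" and nx: "norm x = 1" and ny: "norm y = 1"
  show "\<bar>hfun m t k x y\<bar> \<le> exp (- (real k ^ 2 / 3 + real k * (real m - 1)) * t / 2) * 2^21 * (real k + real m - 2) ^ (3 * m + 5)"
    by (rule h_bound[OF m2 nx ny t])
next
  fix n :: nat and t :: real and x y :: "real^'n"
  assume "n \<le> 3"
  then show "dfun m t n x y = 0" by (rule d_zero)
next
  fix k :: nat and t :: real and x y :: "real^'n"
  assume "k \<le> 5"
  then show "hfun m t k x y = 0" by (rule h_zero)
qed

end
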